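(* Let $d,n\ge1$, let $x_1,\dots,x_n\in\mathbb{R}^d$ be deterministic, $f:\mathbb{R}^d\to\mathbb{R}$, $\sigma>0$, and observe $Y_i=f(x_i)+\sigma\xi_i$, $i=1,\dots,n$, with $\xi_i$ i.i.d. $\mathcal{N}(0,1)$. Let $\mathcal{D}=\{\phi_{a,b}:a\in\mathbb{R}^d,b\in\mathbb{R}\}$ with $\phi_{a,b}(x)=\mathbf{1}\{\langle a,x\rangle+b>0\}$. Assume $$\lambda\ge\frac{28\sigma}{\sqrt n}\Big(\sqrt{\ln((n+1)^{d+1})}+4\Big),$$ and let $\hat f\in\arg\min_{h\in\mathcal{L}_1(\mathcal{D})}\big(\|Y-h\|^2+\lambda\|h\|_{\mathcal{L}_1(\mathcal{D})}\big)$. Then there exists an absolute constant $C>0$ such that $$\mathbb{E}\Big[\|f-\hat f\|^2+\lambda\|\hat f\|_{\mathcal{L}_1(\mathcal{D})}\Big]\le C\Big[\inf_{h\in\mathcal{L}_1(\mathcal{D})}\big(\|f-h\|^2+\lambda\|h\|_{\mathcal{L}_1(\mathcal{D})}\big)+\lambda\frac{\sigma}{\sqrt n}\Big].$$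
   Context: For functions $g,h$ on $\mathbb{R}^d$, $\|h\|^2=\frac1n\sum_{i=1}^nh(x_i)^2$ and $\|Y-h\|^2=\frac1n\sum_{i=1}^n(Y_i-h(x_i))^2$ (functions are identified with their vectors of values at $x_1,\dots,x_n$). $\mathcal{L}_1(\mathcal{D})$ is the linear span of $\mathcal{D}$ with $\|h\|_{\mathcal{L}_1(\mathcal{D})}=\inf\{\sum_{a,b}|\theta_{a,b}|:h=\sum_{a,b}\theta_{a,b}\phi_{a,b}\}$. *)

theory Defs
  imports "HOL-Probability.Probability"
begin

text \<open>Points of R^d are represented as functions nat => real, only the
components j < d being relevant (dimension d is an explicit natural number,
so that the constant C can be chosen independently of d).\<close>

definition inner_d :: "nat \<Rightarrow> (nat \<Rightarrow> real) \<Rightarrow> (nat \<Rightarrow> real) \<Rightarrow> real" where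
  "inner_d d a x = (\<Sum>j<d. a j * x j)"

definition phi :: "nat \<Rightarrow> (nat \<Rightarrow> real) \<Rightarrow> real \<Rightarrow> (nat \<Rightarrow> real) \<Rightarrow> real" where
  "phi d a b x = (if inner_d d a x + b > 0 then 1 else 0)"

definition is_rep :: "nat \<Rightarrow> ((nat \<Rightarrow> real) \<Rightarrow> real) \<Rightarrow> ((nat \<Rightarrow> real) \<times> real) set
     \<Rightarrow> ((nat \<Rightarrow> real) \<times> real \<Rightarrow> real) \<Rightarrow> bool" where
  "is_rep d h S \<theta> \<longleftrightarrow> finite S \<and> (\<forall>x. h x = (\<Sum>p\<in>S. \<theta> p * phi d (fst p) (snd p) x))"

definition L1D :: "nat \<Rightarrow> ((nat \<Rightarrow> real) \<Rightarrow> real) set" where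
  "L1D d = {h. \<exists>S \<theta>. is_rep d h S \<theta>}"

definition L1norm :: "nat \<Rightarrow> ((nat \<Rightarrow> real) \<Rightarrow> real) \<Rightarrow> real" where
  "L1norm d h = Inf {(\<Sum>p\<in>S. \<bar>\<theta> p\<bar>) | S \<theta>. is_rep d h S \<theta>}"

definition emp_sq :: "nat \<Rightarrow> (nat \<Rightarrow> (nat \<Rightarrow> real)) \<Rightarrow> ((nat \<Rightarrow> real) \<Rightarrow> real) \<Rightarrow> real" where
  "emp_sq n xs g = (1 / real n) * (\<Sum>i<n. (g (xs i))\<^sup>2)"

definition emp_res :: "nat \<Rightarrow> (nat \<Rightarrow> (nat \<Rightarrow> real)) \<Rightarrow> (nat \<Rightarrow> real) \<Rightarrow> ((nat \<Rightarrow> real) \<Rightarrow> real) \<Rightarrow> real" where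
  "emp_res n xs Y h = (1 / real n) * (\<Sum>i<n. (Y i - h (xs i))\<^sup>2)"

definition noise :: "nat \<Rightarrow> (nat \<Rightarrow> real) measure" where
  "noise n = PiM {..<n} (\<lambda>_. density lborel std_normal_density)"

definition obs :: "(nat \<Rightarrow> (nat \<Rightarrow> real)) \<Rightarrow> ((nat \<Rightarrow> real) \<Rightarrow> real) \<Rightarrow> real \<Rightarrow> (nat \<Rightarrow> real) \<Rightarrow> (nat \<Rightarrow> real)" where
  "obs xs f \<sigma> \<xi> = (\<lambda>i. f (xs i) + \<sigma> * \<xi> i)"

end

theory Submission
  imports Defs
begin

abbreviation "N \<equiv> density lborel std_normal_density"
term N
lemma mgf: "(\<integral>\<^sup>+ x. ennreal (exp (c*x)) \<partial>N) = ennreal (exp (c^2/2))"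
proof -
  have "(\<integral>\<^sup>+ x. ennreal (exp (c*x)) \<partial>N) = (\<integral>\<^sup>+ x. ennreal (std_normal_density x) * ennreal (exp (c*x)) \<partial>lborel)"
    by (subst nn_integral_density) auto
  also have "\<dots> = (\<integral>\<^sup>+ x. ennreal (exp (c^2/2)) * ennreal (normal_density c 1 x) \<partial>lborel)"
  proof (intro nn_integral_cong)
    fix x
    have "std_normal_density x * exp (c*x) = exp (c^2/2) * normal_density c 1 x"
      unfolding normal_density_def by (simp add: mult_exp_exp power2_eq_square field_simps)
    then show "ennreal (std_normal_density x) * ennreal (exp (c*x)) = ennreal (exp (c^2/2)) * ennreal (normal_density c 1 x)"
      by (simp add: ennreal_mult'[symmetric])
  qed
  also have "\<dots> = ennreal (exp (c^2/2)) * (\<integral>\<^sup>+ x. ennreal (normal_density c 1 x) \<partial>lborel)"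
    by (rule nn_integral_cmult) auto
  also have "(\<integral>\<^sup>+ x. ennreal (normal_density c 1 x) \<partial>lborel) = 1"
    by (subst nn_integral_eq_integral) auto
  finally show ?thesis by simp
qed
lemma m4: "(\<integral>\<^sup>+ x. ennreal (x^4) \<partial>N) = 3"
proof -
  have "(\<integral>\<^sup>+ x. ennreal (x^4) \<partial>N) = (\<integral>\<^sup>+ x. ennreal (std_normal_density x * x^(2*2)) \<partial>lborel)"
    by (subst nn_integral_density) (auto simp: ennreal_mult'[symmetric])
  also have "\<dots> = ennreal (fact (2 * 2) / (2^2 * fact 2))"
    using std_normal_moment_even[of 2]
    by (subst nn_integral_eq_integral) (auto simp: has_bochner_integral_iff)
  also have "\<dots> = 3" by (simp add: fact_numeral)
  finally show ?thesis .
qed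

lemma probN: "prob_space N"
  using prob_space_normal_density[of 1 0] by simp
lemma psfN: "product_sigma_finite (\<lambda>_::nat. N)"
proof -
  interpret prob_space N by (rule probN)
  show ?thesis unfolding product_sigma_finite_def by (simp add: sigma_finite_measure_axioms)
qed
lemma prod_int:
  assumes "\<And>i. i < n \<Longrightarrow> g i \<in> borel_measurable borel"
  shows "(\<integral>\<^sup>+ \<xi>. (\<Prod>i<n. g i (\<xi> i)) \<partial>noise n) = (\<Prod>i<n. \<integral>\<^sup>+ x. g i x \<partial>N)"
  unfolding noise_def
  by (rule product_sigma_finite.product_nn_integral_prod[OF psfN]) (auto simp: assms)

lemma mgf_sum:
  assumes "A \<subseteq> {..<n}"
  shows "(\<integral>\<^sup>+ \<xi>. ennreal (exp (t * (\<Sum>i\<in>A. \<xi> i))) \<partial>noise n) = ennreal (exp (t^2 * card A / 2))"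
proof -
  have fA: "finite A" using assms finite_subset by blast
  have "(\<integral>\<^sup>+ \<xi>. ennreal (exp (t * (\<Sum>i\<in>A. \<xi> i))) \<partial>noise n)
      = (\<integral>\<^sup>+ \<xi>. (\<Prod>i<n. (\<lambda>i x. ennreal (if i \<in> A then exp (t*x) else 1)) i (\<xi> i)) \<partial>noise n)"
  proof (intro nn_integral_cong)
    fix \<xi> :: "nat \<Rightarrow> real"
    have "exp (t * (\<Sum>i\<in>A. \<xi> i)) = (\<Prod>i\<in>A. exp (t * \<xi> i))"
      by (simp add: sum_distrib_left exp_sum fA)
    also have "\<dots> = (\<Prod>i<n. (if i \<in> A then exp (t*\<xi> i) else 1))"
      using prod.If_cases[of "{..<n}" "\<lambda>i. i \<in> A" "\<lambda>i. exp (t*\<xi> i)" "\<lambda>_. 1"] assms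
      by (simp add: Int_absorb1)
    finally show "ennreal (exp (t * (\<Sum>i\<in>A. \<xi> i))) = (\<Prod>i<n. (\<lambda>i x. ennreal (if i \<in> A then exp (t*x) else 1)) i (\<xi> i))"
      by (simp add: prod_ennreal)
  qed
  also have "\<dots> = (\<Prod>i<n. \<integral>\<^sup>+ x. ennreal (if i \<in> A then exp (t*x) else 1) \<partial>N)"
    by (rule prod_int) auto
  also have "\<dots> = (\<Prod>i<n. (if i \<in> A then ennreal (exp (t^2/2)) else 1))"
  proof (intro prod.cong refl)
    fix i
    interpret prob_space N by (rule probN)
    show "(\<integral>\<^sup>+ x. ennreal (if i \<in> A then exp (t*x) else 1) \<partial>N) = (if i \<in> A then ennreal (exp (t^2/2)) else 1)"
      by (cases "i \<in> A") (auto simp: mgf emeasure_space_1[simplified])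
  qed
  also have "\<dots> = (\<Prod>i\<in>A. ennreal (exp (t^2/2)))"
    using prod.If_cases[of "{..<n}" "\<lambda>i. i \<in> A" "\<lambda>i. ennreal (exp (t^2/2))" "\<lambda>_. 1"] assms
    by (simp add: Int_absorb1)
  also have "\<dots> = ennreal (exp (t^2/2) ^ card A)" by (simp add: ennreal_power)
  also have "exp (t^2/2) ^ card A = exp (t^2 * card A / 2)"
    by (simp add: exp_of_nat_mult[symmetric] mult.commute)
  finally show ?thesis .
qed

lemma m4_noise:
  assumes "i < n"
  shows "(\<integral>\<^sup>+ \<xi>. ennreal ((\<xi> i)^4) \<partial>noise n) = 3"
proof -
  have "(\<integral>\<^sup>+ \<xi>. ennreal ((\<xi> i)^4) \<partial>noise n)
      = (\<integral>\<^sup>+ \<xi>. (\<Prod>j<n. (\<lambda>j x. ennreal (if j = i then x^4 else 1)) j (\<xi> j)) \<partial>noise n)"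
  proof (intro nn_integral_cong)
    fix \<xi> :: "nat \<Rightarrow> real"
    have "(\<Prod>j<n. (\<lambda>j x. ennreal (if j = i then x^4 else 1)) j (\<xi> j)) = (\<Prod>j<n. if j = i then ennreal ((\<xi> j)^4) else 1)"
      by (intro prod.cong) auto
    also have "\<dots> = ennreal ((\<xi> i)^4)" using assms by (simp add: prod.delta)
    finally show "ennreal ((\<xi> i)^4) = (\<Prod>j<n. (\<lambda>j x. ennreal (if j = i then x^4 else 1)) j (\<xi> j))" by simp
  qed
  also have "\<dots> = (\<Prod>j<n. \<integral>\<^sup>+ x. ennreal (if j = i then x^4 else 1) \<partial>N)"
    by (rule prod_int) auto
  also have "\<dots> = (\<Prod>j<n. if j = i then 3 else 1)"
  proof (intro prod.cong refl)
    fix j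
    interpret prob_space N by (rule probN)
    show "(\<integral>\<^sup>+ x. ennreal (if j = i then x^4 else 1) \<partial>N) = (if j = i then 3 else 1)"
      by (cases "j = i") (auto simp: m4 emeasure_space_1[simplified])
  qed
  also have "\<dots> = 3" using assms by (simp add: prod.delta)
  finally show ?thesis .
qed


lemma homog_solution:
  fixes c :: "nat \<Rightarrow> 'i \<Rightarrow> real"
  shows "finite S \<Longrightarrow> card S > m \<Longrightarrow> \<exists>lam. (\<exists>i\<in>S. lam i \<noteq> 0) \<and> (\<forall>j<m. (\<Sum>i\<in>S. lam i * c j i) = 0)"
proof (induction m arbitrary: S c)
  case 0
  then obtain i where "i \<in> S" by (metis card.empty ex_in_conv less_irrefl)
  then show ?case by (intro exI[of _ "\<lambda>_. 1"]) auto
next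
  case (Suc m)
  show ?case
  proof (cases "\<forall>i\<in>S. c m i = 0")
    case True
    from Suc.IH[of S c] Suc.prems obtain lam where l: "\<exists>i\<in>S. lam i \<noteq> 0" "\<forall>j<m. (\<Sum>i\<in>S. lam i * c j i) = 0" by auto
    show ?thesis
    proof (intro exI[of _ lam] conjI allI impI)
      fix j assume "j < Suc m"
      then consider "j < m" | "j = m" by linarith
      then show "(\<Sum>i\<in>S. lam i * c j i) = 0" using l True by cases auto
    qed (use l in auto)
  next
    case False
    then obtain k where k: "k \<in> S" "c m k \<noteq> 0" by auto
    define S' where "S' = S - {k}"
    have fS': "finite S'" using Suc.prems S'_def by auto
    have cS': "card S' > m" using Suc.prems k S'_def by (simp add: card_Diff_singleton)
    define c' where "c' j i = c j i - c j k * c m i / c m k" for j i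
    from Suc.IH[OF fS' cS', of c'] obtain \<mu> where
      mu: "\<exists>i\<in>S'. \<mu> i \<noteq> 0" "\<forall>j<m. (\<Sum>i\<in>S'. \<mu> i * c' j i) = 0" by auto
    define lam where "lam = \<mu>(k := - (\<Sum>i\<in>S'. \<mu> i * c m i) / c m k)"
    have kS': "k \<notin> S'" and SS: "S = insert k S'" using S'_def k by auto
    have sumS: "(\<Sum>i\<in>S. lam i * c j i) = (\<Sum>i\<in>S'. \<mu> i * c j i) - c j k * (\<Sum>i\<in>S'. \<mu> i * c m i) / c m k" for j
    proof -
      have "(\<Sum>i\<in>S. lam i * c j i) = lam k * c j k + (\<Sum>i\<in>S'. lam i * c j i)"
        using SS kS' fS' by simp
      also have "(\<Sum>i\<in>S'. lam i * c j i) = (\<Sum>i\<in>S'. \<mu> i * c j i)"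
        using kS' by (intro sum.cong) (auto simp: lam_def)
      finally show ?thesis by (simp add: lam_def)
    qed
    show ?thesis
    proof (intro exI[of _ lam] conjI allI impI)
      show "\<exists>i\<in>S. lam i \<noteq> 0" using mu(1) kS' SS by (auto simp: lam_def)
      fix j assume "j < Suc m"
      then consider "j < m" | "j = m" by linarith
      then show "(\<Sum>i\<in>S. lam i * c j i) = 0"
      proof cases
        case 1
        have "(\<Sum>i\<in>S'. \<mu> i * c' j i) = (\<Sum>i\<in>S'. \<mu> i * c j i) - c j k * (\<Sum>i\<in>S'. \<mu> i * c m i) / c m k"
          unfolding c'_def by (simp add: algebra_simps sum_subtractf sum_distrib_left sum_divide_distrib)
        then show ?thesis using mu(2) 1 sumS by simp
      next
        case 2
        then show ?thesis using sumS k by simp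
      qed
    qed
  qed
qed

definition shatters :: "'a set set \<Rightarrow> 'a set \<Rightarrow> bool" where
  "shatters F S \<longleftrightarrow> (\<forall>T\<subseteq>S. \<exists>A\<in>F. A \<inter> S = T)"

definition patterns :: "nat \<Rightarrow> nat \<Rightarrow> (nat \<Rightarrow> (nat \<Rightarrow> real)) \<Rightarrow> nat set set" where
  "patterns d n xs = {{i\<in>{..<n}. inner_d d a (xs i) + b > 0} | a b. True}"

lemma vc_bound:
  assumes "S \<subseteq> {..<n}" "shatters (patterns d n xs) S"
  shows "card S \<le> d + 1"
proof (rule ccontr)
  assume "\<not> card S \<le> d + 1"
  then have cS: "card S > d + 1" by simp
  have fS: "finite S" using assms(1) finite_subset by blast
  define c where "c j i = (if j < d then xs i j else 1)" for j i
  obtain lam where l: "\<exists>i\<in>S. lam i \<noteq> 0" "\<forall>j<d+1. (\<Sum>i\<in>S. lam i * c j i) = 0"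
    using homog_solution[OF fS cS, of c] by auto
  have sum0: "(\<Sum>i\<in>S. lam i) = 0" using l(2)[rule_format, of d] by (simp add: c_def)
  have coord0: "(\<Sum>i\<in>S. lam i * xs i j) = 0" if "j < d" for j
    using l(2)[rule_format, of j] that by (simp add: c_def)
  define P where "P = {i\<in>S. lam i > 0}"
  have Pne: "P \<noteq> {}"
  proof
    assume "P = {}"
    then have le: "\<forall>i\<in>S. lam i \<le> 0" by (auto simp: P_def not_less)
    have "(\<Sum>i\<in>S. - lam i) = 0" using sum0 by (simp add: sum_negf)
    then have "\<forall>i\<in>S. - lam i = 0" using sum_nonneg_eq_0_iff[OF fS, of "\<lambda>i. - lam i"] le by auto
    then have "\<forall>i\<in>S. lam i = 0" by simp
    then show False using l(1) by auto
  qed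
  from assms(2) obtain A where A: "A \<in> patterns d n xs" "A \<inter> S = P"
    unfolding shatters_def P_def by (metis (no_types, lifting) mem_Collect_eq subsetI)
  then obtain a b where Ab: "A = {i\<in>{..<n}. inner_d d a (xs i) + b > 0}"
    unfolding patterns_def by auto
  have mem: "i \<in> P \<longleftrightarrow> inner_d d a (xs i) + b > 0" if "i \<in> S" for i
    using A(2) Ab that assms(1) by auto
  have "(\<Sum>i\<in>S. lam i * (inner_d d a (xs i) + b)) = (\<Sum>j<d. a j * (\<Sum>i\<in>S. lam i * xs i j)) + b * (\<Sum>i\<in>S. lam i)"
    unfolding inner_d_def
    by (simp add: algebra_simps sum.distrib sum_distrib_left sum_distrib_right sum.swap[of _ S])
  also have "\<dots> = 0" using coord0 sum0 by simp
  finally have z: "(\<Sum>i\<in>S. lam i * (inner_d d a (xs i) + b)) = 0" .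
  have nn: "\<forall>i\<in>S. 0 \<le> lam i * (inner_d d a (xs i) + b)"
  proof
    fix i assume i: "i \<in> S"
    show "0 \<le> lam i * (inner_d d a (xs i) + b)"
    proof (cases "i \<in> P")
      case True then show ?thesis using mem[OF i] by (auto simp: P_def)
    next
      case False
      then have "lam i \<le> 0" "inner_d d a (xs i) + b \<le> 0" using mem[OF i] i by (auto simp: P_def)
      then show ?thesis by (simp add: mult_nonpos_nonpos)
    qed
  qed
  obtain p where p: "p \<in> P" using Pne by auto
  then have "p \<in> S" "0 < lam p * (inner_d d a (xs p) + b)" using mem[of p] by (auto simp: P_def)
  then have "0 < (\<Sum>i\<in>S. lam i * (inner_d d a (xs i) + b))"
    using sum_pos2[OF fS, of p] nn by (meson less_eq_real_def)
  then show False using z by simp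
qed


lemma pajor:
  assumes "finite X"
  shows "F \<subseteq> Pow X \<Longrightarrow> card F \<le> card {S. S \<subseteq> X \<and> shatters F S}"
using assms proof (induction X arbitrary: F rule: finite_induct)
  case empty
  then have "F \<subseteq> {{}}" by auto
  then consider "F = {}" | "F = {{}}" by blast
  then show ?case
  proof cases
    case 2
    then have "{S. S \<subseteq> {} \<and> shatters F S} = {{}}" by (auto simp: shatters_def)
    then show ?thesis using 2 by simp
  qed simp
next
  case (insert x X F)
  define F0 where "F0 = {A\<in>F. x \<notin> A}"
  define F1' where "F1' = {A\<in>F. x \<in> A}"
  define F1 where "F1 = (\<lambda>A. A - {x}) ` F1'"
  have fF: "finite F" using insert.prems insert.hyps(1) by (meson finite_Pow_iff finite_insert rev_finite_subset)
  have F0P: "F0 \<subseteq> Pow X" and F1P: "F1 \<subseteq> Pow X"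
    using insert.prems by (auto simp: F0_def F1_def F1'_def)
  have fF0: "finite F0" and fF1: "finite F1"
    using F0P F1P insert.hyps(1) by (auto intro: finite_subset)
  have inj: "inj_on (\<lambda>A. A - {x}) F1'" by (rule inj_onI) (auto simp: F1'_def)
  have "card F = card F0 + card F1'"
    using fF unfolding F0_def F1'_def by (subst card_Un_disjoint[symmetric]) (auto intro: arg_cong[where f=card])
  also have "card F1' = card F1" unfolding F1_def using card_image[OF inj] by simp
  also have "card F0 + card F1 = card (F0 \<union> F1) + card (F0 \<inter> F1)"
    using card_Un_Int[OF fF0 fF1] .
  finally have cF: "card F = card (F0 \<union> F1) + card (F0 \<inter> F1)" .
  define Sh where "Sh G Y = {S. S \<subseteq> Y \<and> shatters G S}" for G :: "'a set set" and Y :: "'a set"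
  have fSh: "finite (Sh G (insert x X))" for G
    unfolding Sh_def by (rule finite_subset[of _ "Pow (insert x X)"]) (use insert.hyps(1) in auto)
  have a: "card (F0 \<union> F1) \<le> card (Sh (F0 \<union> F1) X)"
    unfolding Sh_def by (rule insert.IH) (use F0P F1P in blast)
  have b: "card (F0 \<inter> F1) \<le> card (Sh (F0 \<inter> F1) X)"
    unfolding Sh_def by (rule insert.IH) (use F0P F1P in blast)
  have sub1: "Sh (F0 \<union> F1) X \<subseteq> {S\<in>Sh F (insert x X). x \<notin> S}"
  proof
    fix S assume S: "S \<in> Sh (F0 \<union> F1) X"
    then have SX: "S \<subseteq> X" and xS: "x \<notin> S" using insert.hyps(2) by (auto simp: Sh_def)
    have "shatters F S" unfolding shatters_def
    proof (intro allI impI)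
      fix T assume "T \<subseteq> S"
      have "shatters (F0 \<union> F1) S" using S by (simp add: Sh_def)
      then obtain A where A: "A \<in> F0 \<union> F1" "A \<inter> S = T" using \<open>T \<subseteq> S\<close> unfolding shatters_def by blast
      show "\<exists>A\<in>F. A \<inter> S = T"
      proof (cases "A \<in> F0")
        case True then show ?thesis using A by (auto simp: F0_def)
      next
        case False
        then obtain A' where "A' \<in> F" "A = A' - {x}" using A by (auto simp: F1_def F1'_def)
        then show ?thesis using A xS by (intro bexI[of _ A']) auto
      qed
    qed
    then show "S \<in> {S\<in>Sh F (insert x X). x \<notin> S}" using SX xS by (auto simp: Sh_def)
  qed
  have sub2: "insert x ` Sh (F0 \<inter> F1) X \<subseteq> {S\<in>Sh F (insert x X). x \<in> S}"
  proof
    fix S' assume "S' \<in> insert x ` Sh (F0 \<inter> F1) X"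
    then obtain S where S: "S \<in> Sh (F0 \<inter> F1) X" and S': "S' = insert x S" by auto
    then have SX: "S \<subseteq> X" and xS: "x \<notin> S" using insert.hyps(2) by (auto simp: Sh_def)
    have "shatters F (insert x S)" unfolding shatters_def
    proof (intro allI impI)
      fix T assume T: "T \<subseteq> insert x S"
      then have "T - {x} \<subseteq> S" by auto
      have "shatters (F0 \<inter> F1) S" using S by (simp add: Sh_def)
      then obtain A where A: "A \<in> F0" "A \<in> F1" "A \<inter> S = T - {x}" using \<open>T - {x} \<subseteq> S\<close> unfolding shatters_def by blast
      then have AF: "A \<in> F" and xA: "x \<notin> A" by (auto simp: F0_def)
      from A obtain A' where A': "A' \<in> F" "x \<in> A'" "A = A' - {x}" by (auto simp: F1_def F1'_def)
      then have iA: "insert x A = A'" by auto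
      show "\<exists>A\<in>F. A \<inter> insert x S = T"
      proof (cases "x \<in> T")
        case True
        then show ?thesis using A' iA A(3) T by (intro bexI[of _ A']) auto
      next
        case False
        then show ?thesis using AF xA A(3) T by (intro bexI[of _ A]) auto
      qed
    qed
    then show "S' \<in> {S\<in>Sh F (insert x X). x \<in> S}" using SX S' by (auto simp: Sh_def)
  qed
  have injx: "inj_on (insert x) (Sh (F0 \<inter> F1) X)"
  proof (rule inj_onI)
    fix S S' assume SS: "S \<in> Sh (F0 \<inter> F1) X" "S' \<in> Sh (F0 \<inter> F1) X" "insert x S = insert x S'"
    then have "x \<notin> S" "x \<notin> S'" using insert.hyps(2) by (auto simp: Sh_def)
    then show "S = S'" using SS(3) by (metis Diff_insert_absorb)
  qed
  have c1: "card (Sh (F0 \<union> F1) X) \<le> card {S\<in>Sh F (insert x X). x \<notin> S}"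
    by (rule card_mono[OF _ sub1]) (use fSh[of F] in auto)
  have "card (Sh (F0 \<inter> F1) X) = card (insert x ` Sh (F0 \<inter> F1) X)"
    using card_image[OF injx] by simp
  also have "\<dots> \<le> card {S\<in>Sh F (insert x X). x \<in> S}"
    by (rule card_mono[OF _ sub2]) (use fSh[of F] in auto)
  finally have c2: "card (Sh (F0 \<inter> F1) X) \<le> card {S\<in>Sh F (insert x X). x \<in> S}" .
  have "card (F0 \<union> F1) + card (F0 \<inter> F1) \<le> card {S\<in>Sh F (insert x X). x \<notin> S} + card {S\<in>Sh F (insert x X). x \<in> S}"
    using a b c1 c2 by linarith
  also have "\<dots> = card (Sh F (insert x X))"
    using fSh[of F] by (subst card_Un_disjoint[symmetric]) (auto intro: arg_cong[where f=card])
  finally show ?case using cF by (simp add: Sh_def)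
qed

lemma count_small_sets:
  "card {S. S \<subseteq> {..<n} \<and> card S \<le> D} \<le> (n + 1) ^ D"
proof -
  have eq: "{S. S \<subseteq> {..<n} \<and> card S \<le> D} = (\<Union>k\<le>D. {S. S \<subseteq> {..<n} \<and> card S = k})" by auto
  have "card {S. S \<subseteq> {..<n} \<and> card S \<le> D} \<le> (\<Sum>k\<le>D. card {S. S \<subseteq> {..<n} \<and> card S = k})"
    unfolding eq by (rule card_UN_le) simp
  also have "\<dots> = (\<Sum>k\<le>D. n choose k)" by (simp add: n_subsets)
  also have "\<dots> \<le> (\<Sum>k\<le>D. (D choose k) * n ^ k)"
  proof (intro sum_mono)
    fix k assume "k \<in> {..D}"
    then have "D choose k \<ge> 1" by (simp add: Suc_leI)
    moreover have "n choose k \<le> n ^ k"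
      by (cases "k \<le> n") (auto simp: binomial_le_pow binomial_eq_0)
    ultimately show "n choose k \<le> (D choose k) * n ^ k"
      by (metis le_trans mult_1 mult_le_mono1 mult.commute nat_mult_le_cancel_disj)
  qed
  also have "\<dots> = (n + 1) ^ D" using binomial_ring[of n 1 D] by (simp add: mult.commute)
  finally show ?thesis .
qed

lemma patterns_card:
  "finite (patterns d n xs) \<and> card (patterns d n xs) \<le> (n + 1) ^ (d + 1)"
proof -
  have P: "patterns d n xs \<subseteq> Pow {..<n}" by (auto simp: patterns_def)
  have "card (patterns d n xs) \<le> card {S. S \<subseteq> {..<n} \<and> shatters (patterns d n xs) S}"
    by (rule pajor[OF _ P]) simp
  also have "\<dots> \<le> card {S. S \<subseteq> {..<n} \<and> card S \<le> d + 1}"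
    by (intro card_mono) (auto dest: vc_bound)
  also have "\<dots> \<le> (n + 1) ^ (d + 1)" by (rule count_small_sets)
  finally show ?thesis using P finite_subset by blast
qed


lemma L1norm_nonneg: "g \<in> L1D d \<Longrightarrow> 0 \<le> L1norm d g"
  unfolding L1norm_def L1D_def
  by (rule cInf_greatest) (auto intro: sum_nonneg)

lemma L1_noise:
  assumes g: "g \<in> L1D d" and t: "t > 0" and n: "n \<ge> 1"
    and good: "\<forall>A\<in>patterns d n xs. \<bar>\<Sum>i\<in>A. \<xi> i\<bar> \<le> t * n"
  shows "\<bar>(1 / real n) * (\<Sum>i<n. \<xi> i * g (xs i))\<bar> \<le> t * L1norm d g"
proof -
  let ?X = "\<bar>(1 / real n) * (\<Sum>i<n. \<xi> i * g (xs i))\<bar>"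
  have "?X / t \<le> L1norm d g"
    unfolding L1norm_def
  proof (rule cInf_greatest)
    show "{(\<Sum>p\<in>S. \<bar>\<theta> p\<bar>) | S \<theta>. is_rep d g S \<theta>} \<noteq> {}" using g by (auto simp: L1D_def)
    fix s assume "s \<in> {(\<Sum>p\<in>S. \<bar>\<theta> p\<bar>) | S \<theta>. is_rep d g S \<theta>}"
    then obtain S \<theta> where s: "s = (\<Sum>p\<in>S. \<bar>\<theta> p\<bar>)" and r: "is_rep d g S \<theta>" by auto
    have fS: "finite S" and gx: "\<And>x. g x = (\<Sum>p\<in>S. \<theta> p * phi d (fst p) (snd p) x)"
      using r by (auto simp: is_rep_def)
    define Ap where "Ap p = {i\<in>{..<n}. inner_d d (fst p) (xs i) + snd p > 0}" for p
    have Apv: "Ap p \<in> patterns d n xs" for p unfolding Ap_def patterns_def by blast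
    have inner: "(\<Sum>i<n. \<xi> i * phi d (fst p) (snd p) (xs i)) = (\<Sum>i\<in>Ap p. \<xi> i)" for p
      unfolding Ap_def phi_def
      using sum.inter_filter[of "{..<n}" \<xi> "\<lambda>i. 0 < inner_d d (fst p) (xs i) + snd p"]
      by (simp add: if_distrib cong: if_cong)
    have "(\<Sum>i<n. \<xi> i * g (xs i)) = (\<Sum>i<n. \<Sum>p\<in>S. \<theta> p * (\<xi> i * phi d (fst p) (snd p) (xs i)))"
      by (simp add: gx sum_distrib_left algebra_simps)
    also have "\<dots> = (\<Sum>p\<in>S. \<theta> p * (\<Sum>i\<in>Ap p. \<xi> i))"
      by (subst sum.swap) (simp add: sum_distrib_left[symmetric] inner)
    finally have eq: "(\<Sum>i<n. \<xi> i * g (xs i)) = (\<Sum>p\<in>S. \<theta> p * (\<Sum>i\<in>Ap p. \<xi> i))" .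
    have "\<bar>\<Sum>p\<in>S. \<theta> p * (\<Sum>i\<in>Ap p. \<xi> i)\<bar> \<le> (\<Sum>p\<in>S. \<bar>\<theta> p\<bar> * (t * n))"
    proof -
      have "\<bar>\<Sum>p\<in>S. \<theta> p * (\<Sum>i\<in>Ap p. \<xi> i)\<bar> \<le> (\<Sum>p\<in>S. \<bar>\<theta> p * (\<Sum>i\<in>Ap p. \<xi> i)\<bar>)"
        by (rule sum_abs)
      also have "\<dots> \<le> (\<Sum>p\<in>S. \<bar>\<theta> p\<bar> * (t * n))"
        using good Apv by (intro sum_mono) (auto simp: abs_mult intro: mult_left_mono)
      finally show ?thesis .
    qed
    then have A: "\<bar>\<Sum>i<n. \<xi> i * g (xs i)\<bar> \<le> s * (t * n)" using eq s by (simp add: sum_distrib_right)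
    have B: "?X = \<bar>\<Sum>i<n. \<xi> i * g (xs i)\<bar> / real n" by (simp add: abs_mult)
    have C: "real n > 0" using n by simp
    have "?X \<le> s * (t * n) / real n" unfolding B by (rule divide_right_mono[OF A]) simp
    also have "\<dots> = s * t" using C by simp
    finally have "?X \<le> s * t" .
    then show "?X / t \<le> s" unfolding pos_divide_le_eq[OF t] .
  qed
  then show ?thesis unfolding pos_divide_le_eq[OF t] by (simp only: mult.commute)
qed


lemma expand_res:
  fixes F G \<xi> :: "nat \<Rightarrow> real"
  shows "(\<Sum>i<n. (F i + s * \<xi> i - G i)^2) = (\<Sum>i<n. (F i - G i)^2) + 2 * s * (\<Sum>i<n. \<xi> i * (F i - G i)) + s^2 * (\<Sum>i<n. (\<xi> i)^2)"
proof -
  have "(\<Sum>i<n. (F i + s * \<xi> i - G i)^2) = (\<Sum>i<n. (F i - G i)^2 + 2 * s * (\<xi> i * (F i - G i)) + s^2 * (\<xi> i)^2)"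
    by (intro sum.cong) (auto simp: power2_eq_square algebra_simps)
  show ?thesis
    by (simp add: \<open>(\<Sum>i<n. (F i + s * \<xi> i - G i)^2) = _\<close> sum.distrib sum_distrib_left)
qed

lemma lin_aux: "(a::real) + p \<le> b + r + x \<Longrightarrow> x \<le> p/2 + r/2 \<Longrightarrow> 0 \<le> a \<Longrightarrow> 0 \<le> b \<Longrightarrow> 0 \<le> p \<Longrightarrow> 0 \<le> r \<Longrightarrow> a + p \<le> 4*(b+r)"
proof -
  assume "(a::real) + p \<le> b + r + x" "x \<le> p/2 + r/2" "0 \<le> a" "0 \<le> b" "0 \<le> p" "0 \<le> r"
  then have "a + p \<le> 4*b+4*r" by linarith
  then show ?thesis by simp
qed

lemma pointwise:
  fixes F G H \<xi> :: "nat \<Rightarrow> real"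
  assumes n: "n \<ge> 1" and s: "s > 0" and lam: "lam \<ge> 0" and t: "t = lam / (4 * s)"
    and NG: "NG \<ge> 0" and NH: "NH \<ge> 0"
    and opt: "(1 / real n) * (\<Sum>i<n. (F i + s * \<xi> i - G i)^2) + lam * NG
              \<le> (1 / real n) * (\<Sum>i<n. (F i + s * \<xi> i - H i)^2) + lam * NH"
  shows "(1 / real n) * (\<Sum>i<n. (F i - G i)^2) + lam * NG
         \<le> 4 * ((1 / real n) * (\<Sum>i<n. (F i - H i)^2) + lam * NH)
            + (if \<bar>(1 / real n) * (\<Sum>i<n. \<xi> i * G i)\<bar> \<le> t * NG \<and> \<bar>(1 / real n) * (\<Sum>i<n. \<xi> i * H i)\<bar> \<le> t * NH
               then 0 else 6 * s^2 * ((1 / real n) * (\<Sum>i<n. (\<xi> i)^2)))"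
proof -
  define sqG where "sqG = (1 / real n) * (\<Sum>i<n. (F i - G i)^2)"
  define sqH where "sqH = (1 / real n) * (\<Sum>i<n. (F i - H i)^2)"
  define Q where "Q = (1 / real n) * (\<Sum>i<n. (\<xi> i)^2)"
  define WG where "WG = (1 / real n) * (\<Sum>i<n. \<xi> i * G i)"
  define WH where "WH = (1 / real n) * (\<Sum>i<n. \<xi> i * H i)"
  define XF where "XF = (1 / real n) * (\<Sum>i<n. \<xi> i * F i)"
  have sqG0: "sqG \<ge> 0" and sqH0: "sqH \<ge> 0" and Q0: "Q \<ge> 0"
    by (auto simp: sqG_def sqH_def Q_def intro!: sum_nonneg divide_nonneg_nonneg)
  have eG: "(1 / real n) * (\<Sum>i<n. (F i + s * \<xi> i - G i)^2) = sqG + 2 * s * (XF - WG) + s^2 * Q"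
    unfolding expand_res sqG_def XF_def WG_def Q_def
    by (simp add: algebra_simps sum_subtractf sum_distrib_left)
  have eH: "(1 / real n) * (\<Sum>i<n. (F i + s * \<xi> i - H i)^2) = sqH + 2 * s * (XF - WH) + s^2 * Q"
    unfolding expand_res sqH_def XF_def WH_def Q_def
    by (simp add: algebra_simps sum_subtractf sum_distrib_left)
  have basic: "sqG + lam * NG \<le> sqH + lam * NH + 2 * s * (WG - WH)"
    using opt unfolding eG eH by (simp add: algebra_simps)
  have gen: "2 * s * (WG - WH) \<le> sqG / 2 + sqH + 3 * s^2 * Q"
  proof -
    have trm: "2 * s * (\<xi> i * G i - \<xi> i * H i) \<le> (F i - G i)^2 / 2 + (F i - H i)^2 + 3 * s^2 * (\<xi> i)^2" for i
    proof -
      have "0 \<le> (G i - F i - 2 * s * \<xi> i)^2 / 2 + (F i - H i - s * \<xi> i)^2" by simp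
      moreover have "(F i - G i)^2 / 2 + (F i - H i)^2 + 3 * s^2 * (\<xi> i)^2 - 2 * s * (\<xi> i * G i - \<xi> i * H i)
          = (G i - F i - 2 * s * \<xi> i)^2 / 2 + (F i - H i - s * \<xi> i)^2"
        by (simp add: power2_eq_square field_simps)
      ultimately show ?thesis by linarith
    qed
    have "(\<Sum>i<n. 2 * s * (\<xi> i * G i - \<xi> i * H i)) \<le> (\<Sum>i<n. (F i - G i)^2 / 2 + (F i - H i)^2 + 3 * s^2 * (\<xi> i)^2)"
      by (rule sum_mono) (rule trm)
    then have "(1 / real n) * (\<Sum>i<n. 2 * s * (\<xi> i * G i - \<xi> i * H i)) \<le> (1 / real n) * (\<Sum>i<n. (F i - G i)^2 / 2 + (F i - H i)^2 + 3 * s^2 * (\<xi> i)^2)"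
      by (rule mult_left_mono) simp
    then show ?thesis
      unfolding sqG_def sqH_def Q_def WG_def WH_def
      by (simp add: algebra_simps sum_subtractf sum_distrib_left sum.distrib sum_divide_distrib)
  qed
  have always': "sqG + lam * NG \<le> 4 * (sqH + lam * NH) + 6 * (s^2 * Q)"
  proof -
    have a: "lam * NG \<ge> 0" "lam * NH \<ge> 0" using lam NG NH by auto
    show ?thesis
      using basic[unfolded mult.assoc] gen[unfolded mult.assoc] a sqG0 sqH0
      by (simp add: algebra_simps)
  qed
  have eq: "?thesis = (sqG + lam * NG \<le> 4 * (sqH + lam * NH) + (if \<bar>WG\<bar> \<le> t * NG \<and> \<bar>WH\<bar> \<le> t * NH then 0 else 6 * s^2 * Q))"
    unfolding sqG_def sqH_def WG_def WH_def Q_def by (rule refl)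
  have main: "sqG + lam * NG \<le> 4 * (sqH + lam * NH) + (if \<bar>WG\<bar> \<le> t * NG \<and> \<bar>WH\<bar> \<le> t * NH then 0 else 6 * s^2 * Q)"
  proof (cases "\<bar>WG\<bar> \<le> t * NG \<and> \<bar>WH\<bar> \<le> t * NH")
    case True
    have st: "2 * s * t = lam / 2" using t s by simp
    have "2 * s * (WG - WH) \<le> 2 * s * (t * NG + t * NH)"
      using True s by (intro mult_left_mono) auto
    also have "\<dots> = (2 * s * t) * NG + (2 * s * t) * NH" by (simp add: algebra_simps)
    also have "\<dots> = lam / 2 * NG + lam / 2 * NH" by (simp only: st)
    also have "\<dots> = (lam * NG) / 2 + (lam * NH) / 2" by simp
    finally have X: "2 * s * (WG - WH) \<le> (lam * NG) / 2 + (lam * NH) / 2" .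
    have "sqG + lam * NG \<le> 4 * (sqH + lam * NH)"
      by (rule lin_aux[OF basic X sqG0 sqH0 mult_nonneg_nonneg[OF lam NG] mult_nonneg_nonneg[OF lam NH]])

    then show ?thesis using True by (simp only: if_P add_0_right)
  next
    case False
    have always: "sqG + lam * NG \<le> 4 * (sqH + lam * NH) + 6 * s^2 * Q"
      using always' by (simp add: mult.assoc)
    from False show ?thesis using always by (simp only: if_not_P if_False)
  qed
  show ?thesis using eq main by blast
qed


lemma prob_noise: "prob_space (noise n)"
  unfolding noise_def by (rule prob_space_PiM) (rule probN)

lemma meas_comp: "i < n \<Longrightarrow> (\<lambda>\<xi>. \<xi> i) \<in> borel_measurable (noise n)"
  unfolding noise_def
  using measurable_component_singleton[of i "{..<n}" "\<lambda>_. N"]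
  by (simp add: measurable_def sets_density)

lemma meas_sumA: "A \<subseteq> {..<n} \<Longrightarrow> (\<lambda>\<xi>. \<Sum>i\<in>A. \<xi> i) \<in> borel_measurable (noise n)"
  by (rule borel_measurable_sum) (use meas_comp in blast)

lemma int_Phi:
  assumes V: "V \<subseteq> Pow {..<n}" "finite V" and c: "c \<ge> 0" and a: "a \<ge> 0" and b: "b \<ge> 0"
  shows "(\<integral>\<^sup>+ \<xi>. ennreal (c + (\<Sum>i<n. a * (\<xi> i)^4) + (\<Sum>A\<in>V. b * (exp (t * (\<Sum>i\<in>A. \<xi> i)) + exp ((-t) * (\<Sum>i\<in>A. \<xi> i))))) \<partial>noise n)
       = ennreal (c + real n * a * 3 + (\<Sum>A\<in>V. b * 2 * exp (t^2 * card A / 2)))"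
proof -
  interpret P: prob_space "noise n" by (rule prob_noise)
  have mA: "A \<in> V \<Longrightarrow> (\<lambda>\<xi>. \<Sum>i\<in>A. \<xi> i) \<in> borel_measurable (noise n)" for A
    using V(1) meas_sumA by blast
  have "(\<integral>\<^sup>+ \<xi>. ennreal (c + (\<Sum>i<n. a * (\<xi> i)^4) + (\<Sum>A\<in>V. b * (exp (t * (\<Sum>i\<in>A. \<xi> i)) + exp ((-t) * (\<Sum>i\<in>A. \<xi> i))))) \<partial>noise n)
    = (\<integral>\<^sup>+ \<xi>. ennreal c + ((\<Sum>i<n. ennreal a * ennreal ((\<xi> i)^4)) + (\<Sum>A\<in>V. ennreal b * (ennreal (exp (t * (\<Sum>i\<in>A. \<xi> i))) + ennreal (exp ((-t) * (\<Sum>i\<in>A. \<xi> i)))))) \<partial>noise n)"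
  proof (intro nn_integral_cong)
    fix \<xi> :: "nat \<Rightarrow> real"
    define S1 where "S1 = (\<Sum>i<n. a * (\<xi> i)^4)"
    define S2 where "S2 = (\<Sum>A\<in>V. b * (exp (t * (\<Sum>i\<in>A. \<xi> i)) + exp ((-t) * (\<Sum>i\<in>A. \<xi> i))))"
    have S10: "S1 \<ge> 0" unfolding S1_def using a by (intro sum_nonneg) auto
    have S20: "S2 \<ge> 0" unfolding S2_def using b by (intro sum_nonneg) auto
    have "ennreal (c + S1 + S2) = ennreal c + (ennreal S1 + ennreal S2)"
      using c S10 S20 by (simp add: ennreal_plus[symmetric] add.assoc del: ennreal_plus)
    moreover have "ennreal S1 = (\<Sum>i<n. ennreal a * ennreal ((\<xi> i)^4))"
      unfolding S1_def using a
      by (subst sum_ennreal[symmetric]) (auto simp: ennreal_mult)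
    moreover have "ennreal S2 = (\<Sum>A\<in>V. ennreal b * (ennreal (exp (t * (\<Sum>i\<in>A. \<xi> i))) + ennreal (exp ((-t) * (\<Sum>i\<in>A. \<xi> i)))))"
      unfolding S2_def using b
      by (subst sum_ennreal[symmetric]) (auto simp: ennreal_mult)
    ultimately show "ennreal (c + (\<Sum>i<n. a * (\<xi> i)^4) + (\<Sum>A\<in>V. b * (exp (t * (\<Sum>i\<in>A. \<xi> i)) + exp ((-t) * (\<Sum>i\<in>A. \<xi> i))))) =
       ennreal c + ((\<Sum>i<n. ennreal a * ennreal ((\<xi> i)^4)) + (\<Sum>A\<in>V. ennreal b * (ennreal (exp (t * (\<Sum>i\<in>A. \<xi> i))) + ennreal (exp ((-t) * (\<Sum>i\<in>A. \<xi> i))))))"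
      unfolding S1_def S2_def by simp
  qed
  also have "\<dots> = ennreal c + ((\<Sum>i<n. ennreal a * 3) + (\<Sum>A\<in>V. ennreal b * (ennreal (exp (t^2 * card A / 2)) + ennreal (exp ((-t)^2 * card A / 2)))))"
  proof -
    have m1: "(\<lambda>\<xi>. ennreal ((\<xi> i)^4)) \<in> borel_measurable (noise n)" if "i < n" for i
      using meas_comp[OF that] by measurable
    have m2: "(\<lambda>\<xi>. ennreal (exp (u * (\<Sum>i\<in>A. \<xi> i)))) \<in> borel_measurable (noise n)" if "A \<in> V" for A u
      using mA[OF that] by measurable
    have m2b: "(\<lambda>\<xi>. ennreal b * (ennreal (exp (t * (\<Sum>i\<in>A. \<xi> i))) + ennreal (exp ((-t) * (\<Sum>i\<in>A. \<xi> i))))) \<in> borel_measurable (noise n)" if "A \<in> V" for A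
      using mA[OF that] by measurable
    have m1s: "(\<lambda>\<xi>. \<Sum>i<n. ennreal a * ennreal ((\<xi> i)^4)) \<in> borel_measurable (noise n)"
      by (intro borel_measurable_sum) (use m1 in auto)
    have m2s: "(\<lambda>\<xi>. \<Sum>A\<in>V. ennreal b * (ennreal (exp (t * (\<Sum>i\<in>A. \<xi> i))) + ennreal (exp ((-t) * (\<Sum>i\<in>A. \<xi> i))))) \<in> borel_measurable (noise n)"
      by (intro borel_measurable_sum) (use m2b in auto)
    have I0: "(\<integral>\<^sup>+ \<xi>. ennreal c \<partial>noise n) = ennreal c"
      by (simp add: P.emeasure_space_1)
    have I1: "(\<integral>\<^sup>+ \<xi>. (\<Sum>i<n. ennreal a * ennreal ((\<xi> i)^4)) \<partial>noise n) = (\<Sum>i<n. ennreal a * 3)"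
      apply (subst nn_integral_sum)
      using m1 apply auto[1]
      apply (intro sum.cong refl)
      apply (subst nn_integral_cmult)
      using m1 m4_noise by auto
    have I2: "(\<integral>\<^sup>+ \<xi>. (\<Sum>A\<in>V. ennreal b * (ennreal (exp (t * (\<Sum>i\<in>A. \<xi> i))) + ennreal (exp ((-t) * (\<Sum>i\<in>A. \<xi> i))))) \<partial>noise n)
         = (\<Sum>A\<in>V. ennreal b * (ennreal (exp (t^2 * card A / 2)) + ennreal (exp ((-t)^2 * card A / 2))))"
    proof -
      have "(\<integral>\<^sup>+ \<xi>. ennreal b * (ennreal (exp (t * (\<Sum>i\<in>A. \<xi> i))) + ennreal (exp ((-t) * (\<Sum>i\<in>A. \<xi> i)))) \<partial>noise n)
         = ennreal b * (ennreal (exp (t^2 * card A / 2)) + ennreal (exp ((-t)^2 * card A / 2)))" if A: "A \<in> V" for A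
      proof -
        have ms: "(\<lambda>\<xi>. ennreal (exp (t * (\<Sum>i\<in>A. \<xi> i))) + ennreal (exp ((-t) * (\<Sum>i\<in>A. \<xi> i)))) \<in> borel_measurable (noise n)"
          using mA[OF A] by measurable
        have AA: "A \<subseteq> {..<n}" using A V(1) by auto
        show ?thesis
          apply (subst nn_integral_cmult[OF ms])
          apply (subst nn_integral_add[OF m2[OF A] m2[OF A]])
          using mgf_sum[OF AA, of t] mgf_sum[OF AA, of "-t"] by (simp only:)
      qed
      then show ?thesis
        by (subst nn_integral_sum) (use m2b in auto)
    qed
    show ?thesis
      apply (subst nn_integral_add)
        apply simp
       apply (rule borel_measurable_add[OF m1s m2s])
      apply (subst nn_integral_add[OF m1s m2s])
      using I0 I1 I2 by simp
  qed
  also have "\<dots> = ennreal (c + real n * a * 3 + (\<Sum>A\<in>V. b * 2 * exp (t^2 * card A / 2)))"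
  proof -
    have "(\<Sum>i<n. ennreal a * 3) = ennreal (real n * a * 3)"
    proof -
      have e1: "ennreal (real n * a * 3) = ennreal (real n * a) * ennreal 3" by (rule ennreal_mult) (use a in auto)
      have e2: "ennreal (real n * a) = ennreal (real n) * ennreal a" by (rule ennreal_mult) (use a in auto)
      show ?thesis unfolding e1 e2 by (simp add: ennreal_of_nat_eq_real_of_nat[symmetric] mult.assoc)
    qed
    moreover have "(\<Sum>A\<in>V. ennreal b * (ennreal (exp (t^2 * card A / 2)) + ennreal (exp ((-t)^2 * card A / 2))))
        = ennreal (\<Sum>A\<in>V. b * 2 * exp (t^2 * card A / 2))"
      using b by (subst sum_ennreal[symmetric]) (auto simp: ennreal_mult[symmetric] ennreal_plus[symmetric] simp del: ennreal_plus intro!: sum.cong simp add: mult.assoc)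
    ultimately show ?thesis using a b c
      by (simp add: ennreal_plus[symmetric] sum_nonneg del: ennreal_plus)
  qed
  finally show ?thesis .
qed


lemma exp_bound:
  fixes n d :: nat and s lam :: real
  assumes n: "n \<ge> 1" and d: "d \<ge> 1" and s: "s > 0"
    and lam: "lam \<ge> 28 * s / sqrt (real n) * (sqrt (ln (real ((n + 1) ^ (d + 1)))) + 4)"
  shows "2 * real n ^ 2 * real ((n + 1) ^ (d + 1)) \<le> exp (real n * (lam / (4 * s))^2 / 2)"
proof -
  define M where "M = real ((n + 1) ^ (d + 1))"
  define L where "L = ln M"
  have M1: "M \<ge> 1" unfolding M_def
  proof -
    have "(1::nat) \<le> (n + 1) ^ (d + 1)" by (simp add: Suc_leI)
    then show "1 \<le> real ((n + 1) ^ (d + 1))" by (metis of_nat_1 of_nat_le_iff)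
  qed
  have hML: "M = exp L" unfolding L_def using M1 by simp
  have L0: "L \<ge> 0" unfolding L_def using M1 by simp
  have nM: "real n ^ 2 \<le> M"
  proof -
    have "real n ^ 2 \<le> real (n + 1) ^ 2" by (intro power_mono) auto
    also have "\<dots> \<le> real (n + 1) ^ (d + 1)" by (rule power_increasing) (use d in auto)
    finally have X: "real n ^ 2 \<le> real (n + 1) ^ (d + 1)" .
    have Y: "M = real (n + 1) ^ (d + 1)" unfolding M_def by (rule of_nat_power)
    show ?thesis unfolding Y by (rule X)
  qed
  have "2 * real n ^ 2 * M \<le> exp 1 * M * M"
  proof -
    have "2 \<le> exp (1::real)" using exp_ge_add_one_self[of 1] by simp
    then have "2 * real n ^ 2 \<le> exp 1 * M" using nM by (intro mult_mono) auto
    then show ?thesis using M1 by (intro mult_right_mono) auto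
  qed
  also have "\<dots> = exp (1 + 2 * L)" unfolding hML exp_add mult_2 by (simp only: mult.assoc)
  finally have A: "2 * real n ^ 2 * M \<le> exp (1 + 2 * L)" .
  define r where "r = sqrt (real n)"
  have r0: "r > 0" unfolding r_def using n by simp
  have rr: "r^2 = real n" unfolding r_def by simp
  have lam': "lam \<ge> 28 * s * (sqrt L + 4) / r"
    using lam unfolding r_def[symmetric] L_def[symmetric] M_def[symmetric] by simp
  have "lam * r \<ge> 28 * s * (sqrt L + 4)"
    using lam' r0 by (simp add: pos_divide_le_eq)
  moreover have "28 * s * (sqrt L + 4) \<ge> 0" using s L0 by simp
  ultimately have "(lam * r)^2 \<ge> (28 * s * (sqrt L + 4))^2" by (intro power_mono)
  then have B: "lam^2 * real n \<ge> 784 * s^2 * (sqrt L + 4)^2" by (simp add: power_mult_distrib rr)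
  have C: "(sqrt L + 4)^2 \<ge> L + 16"
  proof -
    have "(sqrt L + 4)^2 = (sqrt L)^2 + 8 * sqrt L + 16" by (simp add: power2_eq_square algebra_simps)
    also have "(sqrt L)^2 = L" using L0 by simp
    finally show ?thesis using L0 by simp
  qed
  have "real n * (lam / (4 * s))^2 / 2 = lam^2 * real n / (32 * s^2)" by (simp add: power_divide field_simps)
  also have "\<dots> \<ge> 784 * s^2 * (L + 16) / (32 * s^2)"
  proof (rule divide_right_mono)
    have "784 * s^2 * (L + 16) \<le> 784 * s^2 * (sqrt L + 4)^2" using C by (intro mult_left_mono) auto
    then show "784 * s^2 * (L + 16) \<le> lam^2 * real n" using B by linarith
  qed simp
  also have "784 * s^2 * (L + 16) / (32 * s^2) = 49 / 2 * (L + 16)" using s by (simp add: field_simps)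
  finally have F: "real n * (lam / (4 * s))^2 / 2 \<ge> 49 / 2 * (L + 16)" .
  have "49 / 2 * (L + 16) = 49 / 2 * L + 392" by (simp add: distrib_left)
  then have "real n * (lam / (4 * s))^2 / 2 \<ge> 1 + 2 * L" using F L0 by linarith
  then have "exp (1 + 2 * L) \<le> exp (real n * (lam / (4 * s))^2 / 2)" by simp
  with A have "2 * real n ^ 2 * M \<le> exp (real n * (lam / (4 * s))^2 / 2)" by (rule order.trans)
  then show ?thesis unfolding M_def .
qed

lemma Qbad:
  fixes \<xi> :: "nat \<Rightarrow> real"
  assumes t: "t > 0" and n: "n \<ge> 1" and s: "s > 0" and fV: "finite V" and A0: "A0 \<in> V"
    and big: "\<bar>\<Sum>i\<in>A0. \<xi> i\<bar> > t * n"
  shows "6 * s^2 * ((1 / real n) * (\<Sum>i<n. (\<xi> i)^2))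
         \<le> (\<Sum>i<n. (3 * s^2 / (real n)^2) * (\<xi> i)^4)
            + (\<Sum>A\<in>V. (3 * s^2 * real n * exp (- (real n * t^2))) * (exp (t * (\<Sum>i\<in>A. \<xi> i)) + exp ((-t) * (\<Sum>i\<in>A. \<xi> i))))"
proof -
  define Q where "Q = (1 / real n) * (\<Sum>i<n. (\<xi> i)^2)"
  have n0: "real n > 0" using n by simp
  have Q0: "Q \<ge> 0" unfolding Q_def by (intro mult_nonneg_nonneg sum_nonneg) auto
  have QQ: "Q^2 \<le> (\<Sum>i<n. (\<xi> i)^4) / real n"
  proof -
    have "(\<Sum>i<n. (\<xi> i)^2)^2 \<le> (\<Sum>i<n. ((\<xi> i)^2)^2) * card {..<n}"
      by (rule sum_squared_le_sum_of_squares)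
    then have "(\<Sum>i<n. (\<xi> i)^2)^2 \<le> (\<Sum>i<n. (\<xi> i)^4) * real n"
      by (simp add: power_mult[symmetric])
    then have "(\<Sum>i<n. (\<xi> i)^2)^2 / (real n)^2 \<le> (\<Sum>i<n. (\<xi> i)^4) * real n / (real n)^2"
      by (rule divide_right_mono) simp
    moreover have "(\<Sum>i<n. (\<xi> i)^4) * real n / (real n)^2 = (\<Sum>i<n. (\<xi> i)^4) / real n"
      using n0 by (simp add: power2_eq_square)
    moreover have "Q^2 = (\<Sum>i<n. (\<xi> i)^2)^2 / (real n)^2"
      unfolding Q_def by (simp add: power_divide)
    ultimately show ?thesis by simp
  qed
  have amgm: "2 * Q \<le> Q^2 / real n + real n"
  proof -
    have "0 \<le> (Q - real n)^2 / real n" using n0 by simp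
    moreover have "(Q - real n)^2 / real n = Q^2 / real n + real n - 2 * Q"
      using n0 by (simp add: power2_eq_square field_simps)
    ultimately show ?thesis by linarith
  qed
  have part1: "3 * s^2 * (Q^2 / real n) \<le> (\<Sum>i<n. (3 * s^2 / (real n)^2) * (\<xi> i)^4)"
  proof -
    have "3 * s^2 * (Q^2 / real n) \<le> 3 * s^2 * ((\<Sum>i<n. (\<xi> i)^4) / real n / real n)"
      using QQ n0 by (intro mult_left_mono divide_right_mono) auto
    also have "\<dots> = (3 * s^2 / (real n)^2) * (\<Sum>i<n. (\<xi> i)^4)"
      using n0 by (simp add: power2_eq_square field_simps)
    also have "\<dots> = (\<Sum>i<n. (3 * s^2 / (real n)^2) * (\<xi> i)^4)"
      by (rule sum_distrib_left)
    finally show ?thesis .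
  qed
  define e where "e = exp (- (real n * t^2))"
  have e0: "e > 0" unfolding e_def by simp
  have terms0: "\<And>A. 0 \<le> exp (t * (\<Sum>i\<in>A. \<xi> i)) + exp ((-t) * (\<Sum>i\<in>A. \<xi> i))"
    by (simp add: add_nonneg_nonneg)
  have bigexp: "exp (real n * t^2) \<le> exp (t * (\<Sum>i\<in>A0. \<xi> i)) + exp ((-t) * (\<Sum>i\<in>A0. \<xi> i))"
  proof -
    have "t * (t * real n) < t * \<bar>\<Sum>i\<in>A0. \<xi> i\<bar>" using big t by (intro mult_strict_left_mono)
    then have lt: "real n * t^2 < t * \<bar>\<Sum>i\<in>A0. \<xi> i\<bar>" by (simp add: power2_eq_square algebra_simps)
    show ?thesis
    proof (cases "(\<Sum>i\<in>A0. \<xi> i) \<ge> 0")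
      case True
      then have "exp (real n * t^2) \<le> exp (t * (\<Sum>i\<in>A0. \<xi> i))" using lt by simp
      then show ?thesis by (smt (verit) exp_gt_zero)
    next
      case False
      then have "exp (real n * t^2) \<le> exp ((-t) * (\<Sum>i\<in>A0. \<xi> i))" using lt by simp
      then show ?thesis by (smt (verit) exp_gt_zero)
    qed
  qed
  have part2: "3 * s^2 * real n \<le> (\<Sum>A\<in>V. (3 * s^2 * real n * e) * (exp (t * (\<Sum>i\<in>A. \<xi> i)) + exp ((-t) * (\<Sum>i\<in>A. \<xi> i))))"
  proof -
    have "(\<Sum>A\<in>V. exp (t * (\<Sum>i\<in>A. \<xi> i)) + exp ((-t) * (\<Sum>i\<in>A. \<xi> i))) \<ge> exp (t * (\<Sum>i\<in>A0. \<xi> i)) + exp ((-t) * (\<Sum>i\<in>A0. \<xi> i))"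
      using member_le_sum[OF A0 _ fV, of "\<lambda>A. exp (t * (\<Sum>i\<in>A. \<xi> i)) + exp ((-t) * (\<Sum>i\<in>A. \<xi> i))"] terms0 by simp
    with bigexp have S: "exp (real n * t^2) \<le> (\<Sum>A\<in>V. exp (t * (\<Sum>i\<in>A. \<xi> i)) + exp ((-t) * (\<Sum>i\<in>A. \<xi> i)))" by linarith
    have "e * exp (real n * t^2) = 1" unfolding e_def by (simp add: exp_add[symmetric])
    then have "1 \<le> e * (\<Sum>A\<in>V. exp (t * (\<Sum>i\<in>A. \<xi> i)) + exp ((-t) * (\<Sum>i\<in>A. \<xi> i)))"
      using S e0 by (metis mult_left_mono less_imp_le)
    then have "3 * s^2 * real n * 1 \<le> 3 * s^2 * real n * (e * (\<Sum>A\<in>V. exp (t * (\<Sum>i\<in>A. \<xi> i)) + exp ((-t) * (\<Sum>i\<in>A. \<xi> i))))"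
      using s n0 by (intro mult_left_mono) auto
    then show ?thesis by (simp add: sum_distrib_left mult.assoc)
  qed
  have "6 * s^2 * Q = 3 * s^2 * (2 * Q)" by simp
  also have "\<dots> \<le> 3 * s^2 * (Q^2 / real n + real n)" using amgm s by (intro mult_left_mono) auto
  also have "\<dots> = 3 * s^2 * (Q^2 / real n) + 3 * s^2 * real n" by (simp add: distrib_left)
  finally show ?thesis using part1 part2 unfolding Q_def[symmetric] e_def by linarith
qed

lemma sumV_bound:
  assumes n: "n \<ge> 1" and d: "d \<ge> 1" and s: "s > 0"
    and lam: "lam \<ge> 28 * s / sqrt (real n) * (sqrt (ln (real ((n + 1) ^ (d + 1)))) + 4)"
    and t: "t = lam / (4 * s)"
    and V: "V \<subseteq> Pow {..<n}" "finite V" "card V \<le> (n + 1) ^ (d + 1)"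
  shows "(\<Sum>A\<in>V. (3 * s^2 * real n * exp (- (real n * t^2))) * 2 * exp (t^2 * card A / 2)) \<le> 3 * s^2 / real n"
proof -
  have n0: "real n > 0" using n by simp
  define E where "E = exp (real n * t^2 / 2)"
  have E0: "E > 0" unfolding E_def by simp
  have EE: "exp (- (real n * t^2)) * E = 1 / E"
    unfolding E_def by (simp add: exp_add[symmetric] exp_minus_inverse field_simps)
  have "(\<Sum>A\<in>V. (3 * s^2 * real n * exp (- (real n * t^2))) * 2 * exp (t^2 * card A / 2))
      \<le> (\<Sum>A\<in>V. (3 * s^2 * real n * exp (- (real n * t^2))) * 2 * E)"
  proof (intro sum_mono mult_left_mono)
    fix A assume "A \<in> V"
    then have "card A \<le> n" using V(1) by (metis PowD card_lessThan card_mono finite_lessThan subsetD)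
    then have "real (card A) * t^2 \<le> real n * t^2" by (intro mult_right_mono) auto
    then have "t^2 * card A / 2 \<le> real n * t^2 / 2" by (simp add: mult.commute)
    then show "exp (t^2 * card A / 2) \<le> E" unfolding E_def by simp
  qed (use s in auto)
  also have "\<dots> = real (card V) * (6 * s^2 * real n) * (exp (- (real n * t^2)) * E)" by simp
  also have "\<dots> = real (card V) * (6 * s^2 * real n) / E" unfolding EE by simp
  also have "\<dots> \<le> real ((n + 1) ^ (d + 1)) * (6 * s^2 * real n) / E"
  proof -
    have cv: "real (card V) \<le> real ((n + 1) ^ (d + 1))" using V(3) by (simp only: of_nat_le_iff)
    show ?thesis by (intro divide_right_mono mult_right_mono cv) (use s E0 in auto)
  qed
  also have "\<dots> \<le> 3 * s^2 / real n"
  proof -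
    have B: "2 * real n ^ 2 * real ((n + 1) ^ (d + 1)) \<le> E"
      unfolding E_def t using exp_bound[OF n d s lam] .
    have "real ((n + 1) ^ (d + 1)) * (6 * s^2 * real n) * real n = 3 * s^2 * (2 * real n ^ 2 * real ((n + 1) ^ (d + 1)))"
      by (simp add: power2_eq_square)
    also have "\<dots> \<le> 3 * s^2 * E" using B s by (intro mult_left_mono) auto
    finally have "real ((n + 1) ^ (d + 1)) * (6 * s^2 * real n) * real n \<le> 3 * s^2 * E" .
    then show ?thesis using n0 E0 by (simp add: divide_simps mult.commute mult.left_commute)
  qed
  finally show ?thesis .
qed

theorem theorem6p1:
  "\<exists>C>0. \<forall>(d::nat) (n::nat) (xs :: nat \<Rightarrow> (nat \<Rightarrow> real)) (f :: (nat \<Rightarrow> real) \<Rightarrow> real)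
      (\<sigma>::real) (lam::real) (fhat :: (nat \<Rightarrow> real) \<Rightarrow> ((nat \<Rightarrow> real) \<Rightarrow> real)).
     d \<ge> 1 \<longrightarrow> n \<ge> 1 \<longrightarrow> \<sigma> > 0 \<longrightarrow>
     lam \<ge> 28 * \<sigma> / sqrt (real n) * (sqrt (ln (real ((n + 1) ^ (d + 1)))) + 4) \<longrightarrow>
     (\<forall>\<xi>. fhat \<xi> \<in> L1D d \<and>
        (\<forall>h\<in>L1D d. emp_res n xs (obs xs f \<sigma> \<xi>) (fhat \<xi>) + lam * L1norm d (fhat \<xi>)
                     \<le> emp_res n xs (obs xs f \<sigma> \<xi>) h + lam * L1norm d h)) \<longrightarrow>
     (\<forall>i<n. (\<lambda>\<xi>. fhat \<xi> (xs i)) \<in> borel_measurable (noise n)) \<longrightarrow>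
     (\<lambda>\<xi>. L1norm d (fhat \<xi>)) \<in> borel_measurable (noise n) \<longrightarrow>
     (\<integral>\<^sup>+ \<xi>. ennreal (emp_sq n xs (\<lambda>x. f x - fhat \<xi> x) + lam * L1norm d (fhat \<xi>)) \<partial>noise n)
       \<le> ennreal (C * ((INF h\<in>L1D d. emp_sq n xs (\<lambda>x. f x - h x) + lam * L1norm d h)
                       + lam * \<sigma> / sqrt (real n)))"
proof (intro exI[of _ "4::real"] conjI allI impI)
  show "(0::real) < 4" by simp
  fix d n :: nat and xs :: "nat \<Rightarrow> (nat \<Rightarrow> real)" and f :: "(nat \<Rightarrow> real) \<Rightarrow> real"
    and \<sigma> lam :: real and fhat :: "(nat \<Rightarrow> real) \<Rightarrow> ((nat \<Rightarrow> real) \<Rightarrow> real)"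
  assume d: "d \<ge> 1" and n: "n \<ge> 1" and s: "\<sigma> > 0"
    and lam: "lam \<ge> 28 * \<sigma> / sqrt (real n) * (sqrt (ln (real ((n + 1) ^ (d + 1)))) + 4)"
    and opt: "\<forall>\<xi>. fhat \<xi> \<in> L1D d \<and>
        (\<forall>h\<in>L1D d. emp_res n xs (obs xs f \<sigma> \<xi>) (fhat \<xi>) + lam * L1norm d (fhat \<xi>)
                     \<le> emp_res n xs (obs xs f \<sigma> \<xi>) h + lam * L1norm d h)"
  have n0: "real n > 0" using n by simp
  have sq0: "sqrt (real n) > 0" using n0 by simp
  have M1: "real ((n + 1) ^ (d + 1)) \<ge> 1"
  proof -
    have "(1::nat) \<le> (n + 1) ^ (d + 1)" by (simp add: Suc_leI)
    then show ?thesis by (metis of_nat_1 of_nat_le_iff)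
  qed
  have sqL0: "sqrt (ln (real ((n + 1) ^ (d + 1)))) \<ge> 0" using M1 by simp
  have lam0: "lam > 0"
  proof -
    from sqL0 have pos4: "0 < sqrt (ln (real ((n + 1) ^ (d + 1)))) + 4" by linarith
    have "0 < 28 * \<sigma> / sqrt (real n) * (sqrt (ln (real ((n + 1) ^ (d + 1)))) + 4)"
      using s sq0 by (intro mult_pos_pos divide_pos_pos pos4) auto
    then show ?thesis using lam by linarith
  qed
  define t where "t = lam / (4 * \<sigma>)"
  have t0: "t > 0" unfolding t_def using lam0 s by simp
  define V where "V = patterns d n xs"
  have VP: "V \<subseteq> Pow {..<n}" unfolding V_def patterns_def by auto
  have fV: "finite V" and cV: "card V \<le> (n + 1) ^ (d + 1)" using patterns_card unfolding V_def by auto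
  define K where "K = lam * \<sigma> / sqrt (real n)"
  have K0: "K > 0" unfolding K_def using lam0 s sq0 by simp
  define Ah where "Ah h = emp_sq n xs (\<lambda>x. f x - h x) + lam * L1norm d h" for h
  have Ah0: "Ah h \<ge> 0" if "h \<in> L1D d" for h
    unfolding Ah_def emp_sq_def using L1norm_nonneg[OF that] lam0
    by (intro add_nonneg_nonneg mult_nonneg_nonneg sum_nonneg) auto
  have key: "(\<integral>\<^sup>+ \<xi>. ennreal (emp_sq n xs (\<lambda>x. f x - fhat \<xi> x) + lam * L1norm d (fhat \<xi>)) \<partial>noise n)
             \<le> ennreal (4 * Ah h + K)" if h: "h \<in> L1D d" for h
  proof -
    define c where "c = 4 * Ah h"
    define a where "a = 3 * \<sigma>^2 / (real n)^2"
    define b where "b = 3 * \<sigma>^2 * real n * exp (- (real n * t^2))"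
    have c0: "c \<ge> 0" unfolding c_def using Ah0[OF h] by simp
    have a0: "a \<ge> 0" unfolding a_def by simp
    have b0: "b \<ge> 0" unfolding b_def by simp
    have pw: "emp_sq n xs (\<lambda>x. f x - fhat \<xi> x) + lam * L1norm d (fhat \<xi>)
          \<le> c + (\<Sum>i<n. a * (\<xi> i)^4) + (\<Sum>A\<in>V. b * (exp (t * (\<Sum>i\<in>A. \<xi> i)) + exp ((-t) * (\<Sum>i\<in>A. \<xi> i))))" for \<xi>
    proof -
      have fh: "fhat \<xi> \<in> L1D d" using opt by blast
      have o: "emp_res n xs (obs xs f \<sigma> \<xi>) (fhat \<xi>) + lam * L1norm d (fhat \<xi>)
                     \<le> emp_res n xs (obs xs f \<sigma> \<xi>) h + lam * L1norm d h" using opt h by blast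
      define F where "F i = f (xs i)" for i
      define G where "G i = fhat \<xi> (xs i)" for i
      define H where "H i = h (xs i)" for i
      define NG where "NG = L1norm d (fhat \<xi>)"
      define NH where "NH = L1norm d h"
      have o': "(1 / real n) * (\<Sum>i<n. (F i + \<sigma> * \<xi> i - G i)^2) + lam * NG
              \<le> (1 / real n) * (\<Sum>i<n. (F i + \<sigma> * \<xi> i - H i)^2) + lam * NH"
        using o unfolding emp_res_def obs_def F_def G_def H_def NG_def NH_def .
      have P: "(1 / real n) * (\<Sum>i<n. (F i - G i)^2) + lam * NG
         \<le> 4 * ((1 / real n) * (\<Sum>i<n. (F i - H i)^2) + lam * NH)
            + (if \<bar>(1 / real n) * (\<Sum>i<n. \<xi> i * G i)\<bar> \<le> t * NG \<and> \<bar>(1 / real n) * (\<Sum>i<n. \<xi> i * H i)\<bar> \<le> t * NH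
               then 0 else 6 * \<sigma>^2 * ((1 / real n) * (\<Sum>i<n. (\<xi> i)^2)))"
        by (rule pointwise[OF n s less_imp_le[OF lam0] t_def L1norm_nonneg[OF fh, folded NG_def]
                L1norm_nonneg[OF h, folded NH_def] o'])
      have LHS: "emp_sq n xs (\<lambda>x. f x - fhat \<xi> x) + lam * L1norm d (fhat \<xi>) = (1 / real n) * (\<Sum>i<n. (F i - G i)^2) + lam * NG"
        unfolding emp_sq_def F_def G_def NG_def ..
      have AhE: "Ah h = (1 / real n) * (\<Sum>i<n. (F i - H i)^2) + lam * NH"
        unfolding Ah_def emp_sq_def F_def H_def NH_def ..
      have S1: "0 \<le> (\<Sum>i<n. a * (\<xi> i)^4)" using a0 by (intro sum_nonneg) auto
      have S2: "0 \<le> (\<Sum>A\<in>V. b * (exp (t * (\<Sum>i\<in>A. \<xi> i)) + exp ((-t) * (\<Sum>i\<in>A. \<xi> i))))"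
        using b0 by (intro sum_nonneg mult_nonneg_nonneg add_nonneg_nonneg) auto
      show ?thesis
      proof (cases "\<forall>A\<in>V. \<bar>\<Sum>i\<in>A. \<xi> i\<bar> \<le> t * n")
        case True
        have g1: "\<bar>(1 / real n) * (\<Sum>i<n. \<xi> i * G i)\<bar> \<le> t * NG"
          unfolding G_def NG_def by (rule L1_noise[OF fh t0 n True[unfolded V_def]])
        have g2: "\<bar>(1 / real n) * (\<Sum>i<n. \<xi> i * H i)\<bar> \<le> t * NH"
          unfolding H_def NH_def by (rule L1_noise[OF h t0 n True[unfolded V_def]])
        from P g1 g2 have "(1 / real n) * (\<Sum>i<n. (F i - G i)^2) + lam * NG \<le> 4 * ((1 / real n) * (\<Sum>i<n. (F i - H i)^2) + lam * NH)"
          by simp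
        then show ?thesis unfolding LHS c_def AhE using S1 S2 by linarith
      next
        case False
        then obtain A0 where A0: "A0 \<in> V" "\<bar>\<Sum>i\<in>A0. \<xi> i\<bar> > t * n" by (auto simp: not_le)
        have Q: "6 * \<sigma>^2 * ((1 / real n) * (\<Sum>i<n. (\<xi> i)^2))
         \<le> (\<Sum>i<n. a * (\<xi> i)^4) + (\<Sum>A\<in>V. b * (exp (t * (\<Sum>i\<in>A. \<xi> i)) + exp ((-t) * (\<Sum>i\<in>A. \<xi> i))))"
          unfolding a_def b_def by (rule Qbad[OF t0 n s fV A0])
        have "(if \<bar>(1 / real n) * (\<Sum>i<n. \<xi> i * G i)\<bar> \<le> t * NG \<and> \<bar>(1 / real n) * (\<Sum>i<n. \<xi> i * H i)\<bar> \<le> t * NH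
               then 0 else 6 * \<sigma>^2 * ((1 / real n) * (\<Sum>i<n. (\<xi> i)^2))) \<le> 6 * \<sigma>^2 * ((1 / real n) * (\<Sum>i<n. (\<xi> i)^2))"
        proof -
          have q0: "0 \<le> 6 * \<sigma>^2 * ((1 / real n) * (\<Sum>i<n. (\<xi> i)^2))"
            using n0 by (intro mult_nonneg_nonneg sum_nonneg) auto
          show ?thesis using q0 by (simp only: if_split_asm split: if_split) blast
        qed
        then show ?thesis using P Q unfolding LHS c_def AhE by linarith
      qed
    qed
    have "(\<integral>\<^sup>+ \<xi>. ennreal (emp_sq n xs (\<lambda>x. f x - fhat \<xi> x) + lam * L1norm d (fhat \<xi>)) \<partial>noise n)
       \<le> (\<integral>\<^sup>+ \<xi>. ennreal (c + (\<Sum>i<n. a * (\<xi> i)^4) + (\<Sum>A\<in>V. b * (exp (t * (\<Sum>i\<in>A. \<xi> i)) + exp ((-t) * (\<Sum>i\<in>A. \<xi> i))))) \<partial>noise n)"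
      by (intro nn_integral_mono ennreal_leI pw)
    also have "\<dots> = ennreal (c + real n * a * 3 + (\<Sum>A\<in>V. b * 2 * exp (t^2 * card A / 2)))"
      by (rule int_Phi[OF VP fV c0 a0 b0])
    also have "\<dots> \<le> ennreal (4 * Ah h + K)"
    proof (rule ennreal_leI)
      have na: "real n * a * 3 = 9 * \<sigma>^2 / real n" unfolding a_def using n0 by (simp add: power2_eq_square)
      have sb: "(\<Sum>A\<in>V. b * 2 * exp (t^2 * card A / 2)) \<le> 3 * \<sigma>^2 / real n"
        unfolding b_def by (rule sumV_bound[OF n d s lam t_def VP fV cV])
      have Kb: "12 * \<sigma>^2 / real n \<le> K"
      proof -
        have "28 * \<sigma> / sqrt (real n) * 4 \<le> 28 * \<sigma> / sqrt (real n) * (sqrt (ln (real ((n + 1) ^ (d + 1)))) + 4)"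
          using s sq0 sqL0 by (intro mult_left_mono) auto
        then have l2: "112 * \<sigma> / sqrt (real n) \<le> lam" using lam by simp
        have "12 * \<sigma>^2 / real n = (12 * \<sigma> / sqrt (real n)) * \<sigma> / sqrt (real n)"
          using n0 by (simp add: power2_eq_square field_simps)
        also have "\<dots> \<le> lam * \<sigma> / sqrt (real n)"
        proof (intro divide_right_mono mult_right_mono)
          show "12 * \<sigma> / sqrt (real n) \<le> lam" using l2 s sq0 by (smt (verit) divide_right_mono)
        qed (use s sq0 in auto)
        finally show ?thesis unfolding K_def .
      qed
      show "c + real n * a * 3 + (\<Sum>A\<in>V. b * 2 * exp (t^2 * card A / 2)) \<le> 4 * Ah h + K"
        using na sb Kb unfolding c_def by (simp add: add_divide_distrib)
    qed
    finally show ?thesis .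
  qed
  define I where "I = (INF h\<in>L1D d. Ah h)"
  have ne: "Ah ` L1D d \<noteq> {}"
  proof -
    have "(\<lambda>x. 0) \<in> L1D d" unfolding L1D_def is_rep_def by (intro CollectI exI[of _ "{}"]) auto
    then show ?thesis by blast
  qed
  have "\<exists>x\<in>Ah ` L1D d. x < I + K / 2" unfolding I_def by (rule cInf_lessD[OF ne]) (use K0 in simp)
  then obtain h where h: "h \<in> L1D d" "Ah h < I + K / 2" by auto
  have "(\<integral>\<^sup>+ \<xi>. ennreal (emp_sq n xs (\<lambda>x. f x - fhat \<xi> x) + lam * L1norm d (fhat \<xi>)) \<partial>noise n)
        \<le> ennreal (4 * Ah h + K)" by (rule key[OF h(1)])
  also have "\<dots> \<le> ennreal (4 * (I + K))"
    using h(2) K0 by (intro ennreal_leI) simp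
  finally show "(\<integral>\<^sup>+ \<xi>. ennreal (emp_sq n xs (\<lambda>x. f x - fhat \<xi> x) + lam * L1norm d (fhat \<xi>)) \<partial>noise n)
       \<le> ennreal (4 * ((INF h\<in>L1D d. emp_sq n xs (\<lambda>x. f x - h x) + lam * L1norm d h)
                       + lam * \<sigma> / sqrt (real n)))"
    unfolding I_def K_def Ah_def .
qed

end
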